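(* Assume the conditions of Theorem 2.1. Let $(r_1,\alpha_1),\ldots,(r_k,\alpha_k)$ be any finite collection with $r_i\in\{0,\ldots,m\}$ and $\alpha_i\in(0,1)$, let $\xi_i$ be the $\alpha_i$-quantile of $G_{r_i}$, and suppose each $g_{r_i}$ is continuous and positive at $\xi_i$. Let $\Sigma_{EL}$ be the $k\times k$ matrix with entries $\omega_{r_ir_j}(\xi_i,\xi_j)/\{g_{r_i}(\xi_i)g_{r_j}(\xi_j)\}$ (the asymptotic covariance of $\sqrt n(\hat\xi_i-\xi_i)_i$ for the EL quantiles) and $\Sigma_{EM}$ the $k\times k$ matrix with entries $\sigma_{r_ir_j}(\xi_i,\xi_j)/\{g_{r_i}(\xi_i)g_{r_j}(\xi_j)\}$ (the asymptotic covariance of $\sqrt n(\breve\xi_i-\xi_i)_i$ for the empirical quantiles). Then $\Sigma_{EM}-\Sigma_{EL}$ is nonnegative definite. In particular this holds for any pair $0\le r,s\le m$ and any levels $\alpha_r,\alpha_s$.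
   Context: Setting: independent samples $\{x_{kj}\}_{j=1}^{n_k}$ from $G_k$ (density $g_k$), $k=0,\ldots,m$, satisfying the density ratio model $dG_k(x)=\exp\{\theta_k^\tau q(x)\}dG_0(x)$, $q$ known $d$-dimensional with linearly independent components and first component $1$, $\theta_0=0$, true value $\theta^*$, $\int h(x;\theta)dG_0<\infty$ for $\theta$ near $\theta^*$; $n=\sum n_k\to\infty$, $\rho_k=n_k/n$ fixed. $h(x;\theta)=\sum_k\rho_k\exp\{\theta_k^\tau q(x)\}$, $h_k(x)=\rho_k\exp\{\theta_k^{*\tau} q(x)\}/h(x;\theta^* )$, $d\bar G=h(x;\theta^* )dG_0$. The EL quantile $\hat\xi_i=\inf\{x:\hat G_{r_i}(x)\ge\alpha_i\}$ with $\hat G_r(x)=n_r^{-1}\sum_{k,j}h_r(x_{kj};\hat\theta)I(x_{kj}\le x)$, $\hat\theta$ the maximizer of $\ell_n(\theta)=-\sum_{k,j}\log[\sum_r\rho_r\exp\{\theta_r^\tau q(x_{kj})\}]+\sum_{k,j}\theta_k^\tau q(x_{kj})$; the empirical quantile $\breve\xi_i$ is the $\alpha_i$-quantile of the empirical distribution of the $r_i$th sample alone. $W$: $md\times md$ matrix with $d\times d$ blocks $W_{rs}=\int qq^\tau\{h_r\delta_{rs}-h_rh_s\}d\bar G$. $\sigma_{rs}(x,y)=\rho_r^{-1}\delta_{rs}\{G_r(x\wedge y)-G_r(x)G_s(y)\}$; $\omega_{rs}(x,y)=\sigma_{rs}(x,y)-(\rho_r\rho_s)^{-1}\{a_{rs}(x\wedge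 y)-B_r^\tau(x)W^{-1}B_s(y)\}$ with $a_{rs}(x)=\int_{-\infty}^x\{\delta_{rs}h_r-h_rh_s\}d\bar G$ and $B_r(x)\in\mathbb R^{md}$ having $s$th $d$-dimensional segment $B_{r,s}(x)=\int_{-\infty}^x\{\delta_{rs}h_r(t)-h_r(t)h_s(t)\}q(t)\,d\bar G(t)$, $s=1,\ldots,m$. *)

theory Defs
  imports "HOL-Probability.Probability" "Jordan_Normal_Form.Gauss_Jordan_Elimination"
begin

text \<open>Parameters: dimension d of q, number m
 (samples 0..m), proportions rho, parameter theta (theta k a = a-th component of
 theta_k), basis function q (q x a = a-th component of q(x)), baseline density g0.\<close>

definition lin :: "nat \<Rightarrow> (nat \<Rightarrow> nat \<Rightarrow> real) \<Rightarrow> (real \<Rightarrow> nat \<Rightarrow> real) \<Rightarrow> nat \<Rightarrow> real \<Rightarrow> real" where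
  "lin d theta q k x = (\<Sum>a<d. theta k a * q x a)"

definition hfun :: "nat \<Rightarrow> nat \<Rightarrow> (nat \<Rightarrow> real) \<Rightarrow> (nat \<Rightarrow> nat \<Rightarrow> real) \<Rightarrow> (real \<Rightarrow> nat \<Rightarrow> real) \<Rightarrow> real \<Rightarrow> real" where
  "hfun d m rho theta q x = (\<Sum>k\<le>m. rho k * exp (lin d theta q k x))"

definition hr :: "nat \<Rightarrow> nat \<Rightarrow> (nat \<Rightarrow> real) \<Rightarrow> (nat \<Rightarrow> nat \<Rightarrow> real) \<Rightarrow> (real \<Rightarrow> nat \<Rightarrow> real) \<Rightarrow> nat \<Rightarrow> real \<Rightarrow> real" where
  "hr d m rho theta q r x = rho r * exp (lin d theta q r x) / hfun d m rho theta q x"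

definition gk :: "nat \<Rightarrow> (nat \<Rightarrow> nat \<Rightarrow> real) \<Rightarrow> (real \<Rightarrow> nat \<Rightarrow> real) \<Rightarrow> (real \<Rightarrow> real) \<Rightarrow> nat \<Rightarrow> real \<Rightarrow> real" where
  "gk d theta q g0 k x = exp (lin d theta q k x) * g0 x"

definition Gk :: "nat \<Rightarrow> (nat \<Rightarrow> nat \<Rightarrow> real) \<Rightarrow> (real \<Rightarrow> nat \<Rightarrow> real) \<Rightarrow> (real \<Rightarrow> real) \<Rightarrow> nat \<Rightarrow> real \<Rightarrow> real" where
  "Gk d theta q g0 k x = (LINT t:{..x}|lborel. gk d theta q g0 k t)"

definition quantile :: "nat \<Rightarrow> (nat \<Rightarrow> nat \<Rightarrow> real) \<Rightarrow> (real \<Rightarrow> nat \<Rightarrow> real) \<Rightarrow> (real \<Rightarrow> real) \<Rightarrow> nat \<Rightarrow> real \<Rightarrow> real" where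
  "quantile d theta q g0 k \<alpha> = Inf {x. \<alpha> \<le> Gk d theta q g0 k x}"

definition Gbar :: "nat \<Rightarrow> nat \<Rightarrow> (nat \<Rightarrow> real) \<Rightarrow> (nat \<Rightarrow> nat \<Rightarrow> real) \<Rightarrow> (real \<Rightarrow> nat \<Rightarrow> real) \<Rightarrow> (real \<Rightarrow> real) \<Rightarrow> real measure" where
  "Gbar d m rho theta q g0 = density lborel (\<lambda>x. ennreal (hfun d m rho theta q x * g0 x))"

definition kron :: "nat \<Rightarrow> nat \<Rightarrow> real" where
  "kron r s = (if r = s then 1 else 0)"

definition sigma_rs :: "nat \<Rightarrow> (nat \<Rightarrow> real) \<Rightarrow> (nat \<Rightarrow> nat \<Rightarrow> real) \<Rightarrow> (real \<Rightarrow> nat \<Rightarrow> real) \<Rightarrow> (real \<Rightarrow> real) \<Rightarrow> nat \<Rightarrow> nat \<Rightarrow> real \<Rightarrow> real \<Rightarrow> real" where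
  "sigma_rs d rho theta q g0 r s x y =
     kron r s / rho r * (Gk d theta q g0 r (min x y) - Gk d theta q g0 r x * Gk d theta q g0 s y)"

definition a_rs :: "nat \<Rightarrow> nat \<Rightarrow> (nat \<Rightarrow> real) \<Rightarrow> (nat \<Rightarrow> nat \<Rightarrow> real) \<Rightarrow> (real \<Rightarrow> nat \<Rightarrow> real) \<Rightarrow> (real \<Rightarrow> real) \<Rightarrow> nat \<Rightarrow> nat \<Rightarrow> real \<Rightarrow> real" where
  "a_rs d m rho theta q g0 r s x =
     (LINT t:{..x}|Gbar d m rho theta q g0.
        kron r s * hr d m rho theta q r t - hr d m rho theta q r t * hr d m rho theta q s t)"

text \<open>B_r(x) in R^{md}; index (s-1)*d + a (s = 1..m, a < d) holds the a-th component
  of the s-th d-dimensional segment\<close>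
definition B_r :: "nat \<Rightarrow> nat \<Rightarrow> (nat \<Rightarrow> real) \<Rightarrow> (nat \<Rightarrow> nat \<Rightarrow> real) \<Rightarrow> (real \<Rightarrow> nat \<Rightarrow> real) \<Rightarrow> (real \<Rightarrow> real) \<Rightarrow> nat \<Rightarrow> real \<Rightarrow> real vec" where
  "B_r d m rho theta q g0 r x = vec (m * d) (\<lambda>i.
     (let s = i div d + 1; a = i mod d in
      LINT t:{..x}|Gbar d m rho theta q g0.
        (kron r s * hr d m rho theta q r t - hr d m rho theta q r t * hr d m rho theta q s t) * q t a))"

definition Wmat :: "nat \<Rightarrow> nat \<Rightarrow> (nat \<Rightarrow> real) \<Rightarrow> (nat \<Rightarrow> nat \<Rightarrow> real) \<Rightarrow> (real \<Rightarrow> nat \<Rightarrow> real) \<Rightarrow> (real \<Rightarrow> real) \<Rightarrow> real mat" where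
  "Wmat d m rho theta q g0 = mat (m * d) (m * d) (\<lambda>(i, j).
     (let r = i div d + 1; a = i mod d; s = j div d + 1; b = j mod d in
      LINT t|Gbar d m rho theta q g0.
        q t a * q t b * (hr d m rho theta q r t * kron r s - hr d m rho theta q r t * hr d m rho theta q s t)))"

definition omega_rs :: "nat \<Rightarrow> nat \<Rightarrow> (nat \<Rightarrow> real) \<Rightarrow> (nat \<Rightarrow> nat \<Rightarrow> real) \<Rightarrow> (real \<Rightarrow> nat \<Rightarrow> real) \<Rightarrow> (real \<Rightarrow> real) \<Rightarrow> nat \<Rightarrow> nat \<Rightarrow> real \<Rightarrow> real \<Rightarrow> real" where
  "omega_rs d m rho theta q g0 r s x y =
     sigma_rs d rho theta q g0 r s x y
     - (a_rs d m rho theta q g0 r s (min x y)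
        - B_r d m rho theta q g0 r x \<bullet> (the (mat_inverse (Wmat d m rho theta q g0)) *\<^sub>v B_r d m rho theta q g0 s y))
       / (rho r * rho s)"

definition Sigma_EL :: "nat \<Rightarrow> nat \<Rightarrow> (nat \<Rightarrow> real) \<Rightarrow> (nat \<Rightarrow> nat \<Rightarrow> real) \<Rightarrow> (real \<Rightarrow> nat \<Rightarrow> real) \<Rightarrow> (real \<Rightarrow> real) \<Rightarrow> nat \<Rightarrow> (nat \<Rightarrow> nat) \<Rightarrow> (nat \<Rightarrow> real) \<Rightarrow> real mat" where
  "Sigma_EL d m rho theta q g0 K rr al = mat K K (\<lambda>(i, j).
     (let xi = quantile d theta q g0 (rr i) (al i); xj = quantile d theta q g0 (rr j) (al j) in
      omega_rs d m rho theta q g0 (rr i) (rr j) xi xj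
        / (gk d theta q g0 (rr i) xi * gk d theta q g0 (rr j) xj)))"

definition Sigma_EM :: "nat \<Rightarrow> (nat \<Rightarrow> real) \<Rightarrow> (nat \<Rightarrow> nat \<Rightarrow> real) \<Rightarrow> (real \<Rightarrow> nat \<Rightarrow> real) \<Rightarrow> (real \<Rightarrow> real) \<Rightarrow> nat \<Rightarrow> (nat \<Rightarrow> nat) \<Rightarrow> (nat \<Rightarrow> real) \<Rightarrow> real mat" where
  "Sigma_EM d rho theta q g0 K rr al = mat K K (\<lambda>(i, j).
     (let xi = quantile d theta q g0 (rr i) (al i); xj = quantile d theta q g0 (rr j) (al j) in
      sigma_rs d rho theta q g0 (rr i) (rr j) xi xj
        / (gk d theta q g0 (rr i) xi * gk d theta q g0 (rr j) xj)))"

definition nonneg_definite :: "nat \<Rightarrow> real mat \<Rightarrow> bool" where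
  "nonneg_definite n M \<longleftrightarrow> M \<in> carrier_mat n n \<and> (\<forall>v \<in> carrier_vec n. 0 \<le> v \<bullet> (M *\<^sub>v v))"

end

theory Submission
  imports Defs "Jordan_Normal_Form.Determinant"
begin


lemma lin_meas: "\<forall>a<d. (\<lambda>x. q x a) \<in> borel_measurable borel \<Longrightarrow>
   (\<lambda>x. lin d th q k x) \<in> borel_measurable borel"
  unfolding lin_def by (intro borel_measurable_sum borel_measurable_times) auto

lemma exp_meas: "f \<in> borel_measurable M \<Longrightarrow> (\<lambda>x. exp (f x :: real)) \<in> borel_measurable M"
  by (rule measurable_compose[OF _ borel_measurable_exp])

lemma hfun_meas: "\<forall>a<d. (\<lambda>x. q x a) \<in> borel_measurable borel \<Longrightarrow>
   (\<lambda>x. hfun d m rho th q x) \<in> borel_measurable borel"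
  unfolding hfun_def by (intro borel_measurable_sum borel_measurable_times exp_meas lin_meas) auto

lemma hfun_pos: "\<forall>k\<le>m. 0 < rho k \<Longrightarrow> 0 < hfun d m rho th q x"
  unfolding hfun_def by (intro sum_pos) auto

lemma hr_meas: "\<forall>a<d. (\<lambda>x. q x a) \<in> borel_measurable borel \<Longrightarrow>
   (\<lambda>x. hr d m rho th q r x) \<in> borel_measurable borel"
  unfolding hr_def by (intro borel_measurable_divide borel_measurable_times exp_meas lin_meas hfun_meas) auto

lemma exp_sq: "(y::real)^2 / 4 \<le> exp y + exp (- y)"
proof -
  have "exp \<bar>y\<bar> = (exp (\<bar>y\<bar>/2))^2" by (simp add: power2_eq_square flip: exp_add)
  moreover have "\<bar>y\<bar>/2 \<le> exp (\<bar>y\<bar>/2)" using exp_ge_add_one_self[of "\<bar>y\<bar>/2"] by linarith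
  hence "(\<bar>y\<bar>/2)^2 \<le> (exp (\<bar>y\<bar>/2))^2" by (intro power_mono) auto
  moreover have "exp \<bar>y\<bar> \<le> exp y + exp (- y)" by (cases "y \<ge> 0") auto
  ultimately show ?thesis by (simp add: power_divide)
qed

lemma lin_upd:
  assumes "a < d"
  shows "lin d (th(s := (th s)(a := v))) q s x = lin d th q s x + (v - th s a) * q x a"
proof -
  have "lin d (th(s := (th s)(a := v))) q s x = (\<Sum>b<d. th s b * q x b + (if b = a then (v - th s a) * q x a else 0))"
    unfolding lin_def by (intro sum.cong) (auto simp: algebra_simps)
  also have "\<dots> = lin d th q s x + (v - th s a) * q x a"
    unfolding lin_def sum.distrib using assms by simp
  finally show ?thesis .
qed

lemma kron_sum: "a \<le> m \<Longrightarrow> (\<Sum>k\<le>m. f k * kron a k) = (f a :: real)"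
  unfolding kron_def by (simp add: if_distrib cong: if_cong)

lemma kron_sym: "kron a b = kron b a" unfolding kron_def by auto

lemma sum_split_add: fixes K N :: nat and f :: "nat \<Rightarrow> real" shows "(\<Sum>p<K+N. f p) = (\<Sum>p<K. f p) + (\<Sum>j<N. f (K+j))"
  by (induction N) auto

lemma sum_split_mult: fixes m d :: nat and f :: "nat \<Rightarrow> real" shows "(\<Sum>j<m*d. f j) = (\<Sum>s<m. \<Sum>a<d. f (s*d+a))"
proof (induction m)
  case (Suc m)
  have "(\<Sum>j<Suc m*d. f j) = (\<Sum>j<m*d + d. f j)" by (simp add: add.commute)
  also have "\<dots> = (\<Sum>j<m*d. f j) + (\<Sum>a<d. f (m*d+a))" by (rule sum_split_add)
  finally show ?case using Suc by simp
qed simp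

lemma var_ident:
  fixes h :: "nat \<Rightarrow> real"
  assumes "a \<le> m" "b \<le> m" "(\<Sum>k\<le>m. h k) = 1"
  shows "(\<Sum>k\<le>m. h k * (kron a k - h a) * (kron b k - h b)) = kron a b * h a - h a * h b"
proof -
  have "(\<Sum>k\<le>m. h k * (kron a k - h a) * (kron b k - h b))
     = (\<Sum>k\<le>m. (h k * kron b k) * kron a k) - h b * (\<Sum>k\<le>m. h k * kron a k)
       - h a * (\<Sum>k\<le>m. h k * kron b k) + h a * h b * (\<Sum>k\<le>m. h k)"
    by (simp add: sum_subtractf sum_distrib_left sum.distrib algebra_simps)
  also have "\<dots> = h a * kron b a - h b * h a - h a * h b + h a * h b"
    using assms by (simp add: kron_sum)
  finally show ?thesis by (simp add: kron_sym algebra_simps)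
qed

lemma psd_ident:
  fixes h x :: "nat \<Rightarrow> real"
  assumes r: "\<forall>p\<in>P. r p \<le> m" and s: "(\<Sum>k\<le>m. h k) = 1"
  shows "(\<Sum>p\<in>P. \<Sum>p'\<in>P. x p * x p' * (kron (r p) (r p') * h (r p) - h (r p) * h (r p')))
       = (\<Sum>k\<le>m. h k * (\<Sum>p\<in>P. x p * (kron (r p) k - h (r p)))^2)"
proof -
  have "(\<Sum>k\<le>m. h k * (\<Sum>p\<in>P. x p * (kron (r p) k - h (r p)))^2)
    = (\<Sum>k\<le>m. \<Sum>p\<in>P. \<Sum>p'\<in>P. x p * x p' * (h k * (kron (r p) k - h (r p)) * (kron (r p') k - h (r p'))))"
    by (simp add: power2_eq_square sum_product sum_distrib_left mult_ac)
  also have "\<dots> = (\<Sum>p\<in>P. \<Sum>p'\<in>P. \<Sum>k\<le>m. x p * x p' * (h k * (kron (r p) k - h (r p)) * (kron (r p') k - h (r p'))))"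
    by (subst sum.swap) (simp add: sum.swap[of _ "{..m}"])
  also have "\<dots> = (\<Sum>p\<in>P. \<Sum>p'\<in>P. x p * x p' * (kron (r p) (r p') * h (r p) - h (r p) * h (r p')))"
    using r by (intro sum.cong refl) (simp add: var_ident[OF _ _ s] flip: sum_distrib_left)
  finally show ?thesis by simp
qed




locale drm =
  fixes d m :: nat and rho :: "nat \<Rightarrow> real" and theta :: "nat \<Rightarrow> nat \<Rightarrow> real"
    and q :: "real \<Rightarrow> nat \<Rightarrow> real" and g0 :: "real \<Rightarrow> real"
  assumes d_pos: "0 < d"
    and q_meas: "\<forall>a<d. (\<lambda>x. q x a) \<in> borel_measurable borel"
    and q_indep: "\<forall>c :: nat \<Rightarrow> real.
        (AE x in density lborel (\<lambda>x. ennreal (g0 x)). (\<Sum>a<d. c a * q x a) = 0)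
        \<longrightarrow> (\<forall>a<d. c a = 0)"
    and g0_meas: "g0 \<in> borel_measurable borel"
    and g0_nonneg: "\<forall>x. 0 \<le> g0 x"
    and theta0: "\<forall>a<d. theta 0 a = 0"
    and rho_pos: "\<forall>k\<le>m. 0 < rho k"
    and h_integrable: "\<exists>\<epsilon>>0. \<forall>theta' :: nat \<Rightarrow> nat \<Rightarrow> real.
        (\<forall>a<d. theta' 0 a = 0) \<and> (\<forall>k\<le>m. \<forall>a<d. \<bar>theta' k a - theta k a\<bar> < \<epsilon>)
        \<longrightarrow> integrable (density lborel (\<lambda>x. ennreal (g0 x))) (hfun d m rho theta' q)"
begin

abbreviation "h \<equiv> hfun d m rho theta q"
abbreviation "H \<equiv> hr d m rho theta q"
abbreviation "M \<equiv> Gbar d m rho theta q g0"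
definition "Kf r s t = kron r s * H r t - H r t * H s t"

lemma g0_meas'[measurable]: "g0 \<in> borel_measurable borel" using g0_meas .

lemma qa_meas[measurable]: "a < d \<Longrightarrow> (\<lambda>x. q x a) \<in> borel_measurable borel"
  using q_meas by auto

lemma h_meas[measurable]: "(\<lambda>x. hfun d m rho th q x) \<in> borel_measurable borel"
  using hfun_meas[OF q_meas] .

lemma H_meas[measurable]: "(\<lambda>x. hr d m rho th q r x) \<in> borel_measurable borel"
  using hr_meas[OF q_meas] .

lemma Kf_meas[measurable]: "(\<lambda>x. Kf r s x) \<in> borel_measurable borel"
  unfolding Kf_def by measurable

lemma h_pos: "0 < hfun d m rho th q x"
  using hfun_pos rho_pos by blast

lemma H_nonneg: "r \<le> m \<Longrightarrow> 0 \<le> H r t"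
  unfolding hr_def using rho_pos h_pos[of theta t] by (auto intro!: divide_nonneg_pos)

lemma H_pos: "r \<le> m \<Longrightarrow> 0 < H r t"
  unfolding hr_def using rho_pos h_pos[of theta t] by (auto intro!: divide_pos_pos)

lemma sum_H: "(\<Sum>r\<le>m. H r t) = 1"
  using h_pos[of theta t] unfolding hr_def by (simp add: hfun_def flip: sum_divide_distrib)

lemma H_le1: "r \<le> m \<Longrightarrow> H r t \<le> 1"
proof -
  assume "r \<le> m"
  hence "H r t \<le> (\<Sum>k\<le>m. H k t)" by (intro member_le_sum) (auto simp: H_nonneg)
  thus ?thesis using sum_H by simp
qed

lemma hH: "r \<le> m \<Longrightarrow> h t * H r t = rho r * exp (lin d theta q r t)"
  unfolding hr_def using h_pos[of theta t] by simp

lemma Kf_sym: "Kf r s t = Kf s r t"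
  unfolding Kf_def kron_def by auto

lemma Kf_le1: "r \<le> m \<Longrightarrow> s \<le> m \<Longrightarrow> \<bar>Kf r s t\<bar> \<le> H s t"
proof -
  assume r: "r \<le> m" and s: "s \<le> m"
  note * = H_nonneg[OF r, of t] H_nonneg[OF s, of t] H_le1[OF r, of t] H_le1[OF s, of t]
  show ?thesis
  proof (cases "r = s")
    case True
    have "0 \<le> H s t * (1 - H s t)" "H s t * (1 - H s t) \<le> H s t"
      using * by (auto intro: mult_nonneg_nonneg mult_left_le)
    thus ?thesis using True unfolding Kf_def kron_def by (simp add: algebra_simps)
  next
    case False
    thus ?thesis using * unfolding Kf_def kron_def
      by (simp add: abs_mult mult_left_le_one_le)
  qed
qed

lemma Kf_le2: "r \<le> m \<Longrightarrow> s \<le> m \<Longrightarrow> \<bar>Kf r s t\<bar> \<le> H r t"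
  using Kf_le1[of s r t] by (simp add: Kf_sym)

lemma Kf_le: "r \<le> m \<Longrightarrow> s \<le> m \<Longrightarrow> \<bar>Kf r s t\<bar> \<le> 1"
  using Kf_le1[of r s t] H_le1[of s t] by linarith

lemma M_meas: "f \<in> borel_measurable M \<longleftrightarrow> f \<in> borel_measurable borel"
  unfolding Gbar_def by simp

lemma int_M: "f \<in> borel_measurable borel \<Longrightarrow>
    integrable M f \<longleftrightarrow> integrable lborel (\<lambda>x. (h x * g0 x) * f x)"
  unfolding Gbar_def
  by (subst integrable_density) (auto simp: g0_meas g0_nonneg h_pos less_imp_le intro!: borel_measurable_times)

lemma int_g0: "f \<in> borel_measurable borel \<Longrightarrow>
    integrable (density lborel (\<lambda>x. ennreal (g0 x))) f \<longleftrightarrow> integrable lborel (\<lambda>x. g0 x * f x)"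
  by (subst integrable_density) (auto simp: g0_meas g0_nonneg)

lemma int_one: "integrable M (\<lambda>_. 1::real)"
proof -
  obtain \<epsilon> where "\<epsilon> > 0" and e: "\<forall>theta' :: nat \<Rightarrow> nat \<Rightarrow> real.
        (\<forall>a<d. theta' 0 a = 0) \<and> (\<forall>k\<le>m. \<forall>a<d. \<bar>theta' k a - theta k a\<bar> < \<epsilon>)
        \<longrightarrow> integrable (density lborel (\<lambda>x. ennreal (g0 x))) (hfun d m rho theta' q)"
    using h_integrable by blast
  have "integrable (density lborel (\<lambda>x. ennreal (g0 x))) h"
    using e[rule_format, of theta] theta0 \<open>\<epsilon> > 0\<close> by auto
  hence "integrable lborel (\<lambda>x. g0 x * h x)" by (simp add: int_g0)
  thus ?thesis by (subst int_M) (auto simp: mult_ac)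
qed

lemma int_pert:
  assumes s: "1 \<le> s" "s \<le> m" and a: "a < d"
  shows "integrable lborel (\<lambda>x. g0 x * ((q x a)^2 * exp (lin d theta q s x)))"
proof -
  obtain \<epsilon> where ep: "\<epsilon> > 0" and e: "\<forall>theta' :: nat \<Rightarrow> nat \<Rightarrow> real.
        (\<forall>a<d. theta' 0 a = 0) \<and> (\<forall>k\<le>m. \<forall>a<d. \<bar>theta' k a - theta k a\<bar> < \<epsilon>)
        \<longrightarrow> integrable (density lborel (\<lambda>x. ennreal (g0 x))) (hfun d m rho theta' q)"
    using h_integrable by blast
  define \<delta> where "\<delta> = \<epsilon>/2"
  have dp: "\<delta> > 0" using ep by (simp add: \<delta>_def)
  define th1 where "th1 = theta(s := (theta s)(a := theta s a + \<delta>))"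
  define th2 where "th2 = theta(s := (theta s)(a := theta s a - \<delta>))"
  have "integrable (density lborel (\<lambda>x. ennreal (g0 x))) (hfun d m rho th1 q)"
    using e[rule_format, of th1] theta0 ep s dp unfolding th1_def \<delta>_def by auto
  hence i1: "integrable lborel (\<lambda>x. g0 x * hfun d m rho th1 q x)" by (simp add: int_g0)
  have "integrable (density lborel (\<lambda>x. ennreal (g0 x))) (hfun d m rho th2 q)"
    using e[rule_format, of th2] theta0 ep s dp unfolding th2_def \<delta>_def by auto
  hence i2: "integrable lborel (\<lambda>x. g0 x * hfun d m rho th2 q x)" by (simp add: int_g0)
  define C where "C = 4 / (\<delta>^2 * rho s)"
  have rs: "rho s > 0" using rho_pos s by auto
  have Cp: "C > 0" using dp rs by (simp add: C_def)
  show ?thesis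
  proof (rule Bochner_Integration.integrable_bound[where f="\<lambda>x. C * (g0 x * hfun d m rho th1 q x + g0 x * hfun d m rho th2 q x)"])
    show "integrable lborel (\<lambda>x. C * (g0 x * hfun d m rho th1 q x + g0 x * hfun d m rho th2 q x))"
      using i1 i2 by auto
    show "(\<lambda>x. g0 x * ((q x a)^2 * exp (lin d theta q s x))) \<in> borel_measurable lborel"
      using a by (simp; intro borel_measurable_times exp_meas lin_meas[OF q_meas]) (auto simp: g0_meas)
    show "AE x in lborel. norm (g0 x * ((q x a)^2 * exp (lin d theta q s x)))
       \<le> norm (C * (g0 x * hfun d m rho th1 q x + g0 x * hfun d m rho th2 q x))"
    proof (rule AE_I2)
      fix x
      have l1: "lin d th1 q s x = lin d theta q s x + \<delta> * q x a"
        unfolding th1_def using lin_upd[OF a] by simp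
      have l2: "lin d th2 q s x = lin d theta q s x - \<delta> * q x a"
        unfolding th2_def using lin_upd[OF a] by simp
      have hb1: "rho s * exp (lin d th1 q s x) \<le> hfun d m rho th1 q x"
        unfolding hfun_def using s rho_pos
        by (intro member_le_sum[where f="\<lambda>k. rho k * exp (lin d th1 q k x)"]) (auto intro: less_imp_le)
      have hb2: "rho s * exp (lin d th2 q s x) \<le> hfun d m rho th2 q x"
        unfolding hfun_def using s rho_pos
        by (intro member_le_sum[where f="\<lambda>k. rho k * exp (lin d th2 q k x)"]) (auto intro: less_imp_le)
      have es: "(\<delta> * q x a)^2 / 4 \<le> exp (\<delta> * q x a) + exp (- (\<delta> * q x a))" by (rule exp_sq)
      have E: "exp (lin d th1 q s x) + exp (lin d th2 q s x)
            = exp (lin d theta q s x) * (exp (\<delta> * q x a) + exp (- (\<delta> * q x a)))"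
        by (simp add: l1 l2 exp_add exp_diff exp_minus algebra_simps divide_inverse)
      have "(q x a)^2 * exp (lin d theta q s x) \<le> C * (hfun d m rho th1 q x + hfun d m rho th2 q x)"
      proof -
        have "(q x a)^2 * exp (lin d theta q s x) = exp (lin d theta q s x) * ((\<delta> * q x a)^2/4) * (4/\<delta>^2)"
          using dp by (simp add: power_mult_distrib field_simps)
        also have "\<dots> \<le> exp (lin d theta q s x) * (exp (\<delta> * q x a) + exp (- (\<delta> * q x a))) * (4/\<delta>^2)"
          using es dp by (intro mult_right_mono mult_left_mono) auto
        also have "\<dots> = (exp (lin d th1 q s x) + exp (lin d th2 q s x)) * (4/\<delta>^2)"
          by (simp only: E)
        also have "\<dots> = (rho s * exp (lin d th1 q s x) + rho s * exp (lin d th2 q s x)) * C"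
          using rs dp unfolding C_def by (simp add: field_simps)
        also have "\<dots> \<le> (hfun d m rho th1 q x + hfun d m rho th2 q x) * C"
          using hb1 hb2 Cp by (intro mult_right_mono) auto
        finally show ?thesis by (simp add: mult_ac)
      qed
      hence "g0 x * ((q x a)^2 * exp (lin d theta q s x)) \<le> g0 x * (C * (hfun d m rho th1 q x + hfun d m rho th2 q x))"
        using g0_nonneg by (intro mult_left_mono) auto
      moreover have "0 \<le> g0 x * ((q x a)^2 * exp (lin d theta q s x))" using g0_nonneg by simp
      ultimately show "norm (g0 x * ((q x a)^2 * exp (lin d theta q s x)))
       \<le> norm (C * (g0 x * hfun d m rho th1 q x + g0 x * hfun d m rho th2 q x))"
        by (simp add: algebra_simps)
    qed
  qed
qed

lemma int_q2H:
  assumes s: "1 \<le> s" "s \<le> m" and a: "a < d"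
  shows "integrable M (\<lambda>t. (q t a)^2 * H s t)"
proof -
  have "integrable lborel (\<lambda>x. rho s * (g0 x * ((q x a)^2 * exp (lin d theta q s x))))"
    using int_pert[OF assms] by auto
  also have "(\<lambda>x. rho s * (g0 x * ((q x a)^2 * exp (lin d theta q s x)))) = (\<lambda>x. (h x * g0 x) * ((q x a)^2 * H s x))"
  proof
    fix x show "rho s * (g0 x * ((q x a)^2 * exp (lin d theta q s x))) = (h x * g0 x) * ((q x a)^2 * H s x)"
      using hH[OF s(2), of x] by (simp add: algebra_simps)
  qed
  finally show ?thesis using a by (subst int_M) auto
qed

end



lemma bnd1: "abs (u1::real) \<le> 1 \<Longrightarrow> abs u2 \<le> 1 \<Longrightarrow> abs u3 \<le> 1 \<Longrightarrow> abs (u1 * u2 * u3) \<le> 1"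
  by (simp add: abs_mult mult_le_one)



lemma abs_le_sq: "\<bar>x::real\<bar> \<le> 1 + x^2"
proof (cases "\<bar>x\<bar> \<le> 1")
  case True
  moreover have "0 \<le> x^2" by simp
  ultimately show ?thesis by linarith
next
  case False
  hence "\<bar>x\<bar> * 1 \<le> \<bar>x\<bar> * \<bar>x\<bar>" by (intro mult_left_mono) auto
  also have "\<bar>x\<bar> * \<bar>x\<bar> = x^2" by (simp add: power2_eq_square)
  finally show ?thesis by linarith
qed

lemma abs_prod_le_sq: "abs (x*y::real) \<le> x^2 + y^2"
proof -
  have "0 \<le> (\<bar>x\<bar> - \<bar>y\<bar>)^2" by simp
  hence "2*(\<bar>x\<bar>*\<bar>y\<bar>) \<le> x^2 + y^2" by (simp add: power2_eq_square algebra_simps abs_mult_self)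
  moreover have "0 \<le> \<bar>x\<bar>*\<bar>y\<bar>" by simp
  ultimately have "\<bar>x\<bar>*\<bar>y\<bar> \<le> x^2 + y^2" by linarith
  thus ?thesis by (simp add: abs_mult)
qed

lemma bnd2:
  fixes u x k Hs :: real
  assumes "\<bar>u\<bar> \<le> 1" "\<bar>k\<bar> \<le> Hs" "Hs \<le> 1"
  shows "abs (u*x*k) \<le> 1 + x^2 * Hs"
proof -
  have Hs: "0 \<le> Hs" using assms(2) by linarith
  have "abs (u*x*k) = \<bar>u\<bar> * (\<bar>x\<bar> * \<bar>k\<bar>)" by (simp add: abs_mult)
  also have "\<dots> \<le> 1 * (\<bar>x\<bar> * Hs)" using assms by (intro mult_mono) (auto intro: mult_left_mono)
  also have "\<dots> \<le> (1 + x^2) * Hs" using abs_le_sq[of x] Hs by (simp add: mult_right_mono)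
  also have "\<dots> \<le> 1 + x^2 * Hs" using assms(3) by (simp add: algebra_simps)
  finally show ?thesis .
qed

lemma bnd3:
  fixes x y k Hs :: real
  assumes "\<bar>k\<bar> \<le> Hs"
  shows "abs (x*y*k) \<le> x^2 * Hs + y^2 * Hs"
proof -
  have Hs: "0 \<le> Hs" using assms by linarith
  have "abs (x*y*k) = abs (x*y) * \<bar>k\<bar>" by (simp add: abs_mult)
  also have "\<dots> \<le> (x^2 + y^2) * Hs" using assms abs_prod_le_sq[of x y] Hs by (intro mult_mono) auto
  finally show ?thesis by (simp add: algebra_simps)
qed

context drm begin

definition "S t = (\<Sum>s\<in>{1..m}. \<Sum>a<d. (q t a)^2 * H s t)"
definition "D t = 1 + 2 * S t"

lemma S_term: "1 \<le> s \<Longrightarrow> s \<le> m \<Longrightarrow> a < d \<Longrightarrow> (q t a)^2 * H s t \<le> S t"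
proof -
  assume s: "1 \<le> s" "s \<le> m" and a: "a < d"
  have "(q t a)^2 * H s t \<le> (\<Sum>a<d. (q t a)^2 * H s t)"
    using a H_nonneg[OF s(2)] by (intro member_le_sum[where f="\<lambda>a. (q t a)^2 * H s t"]) auto
  also have "\<dots> \<le> S t" unfolding S_def
    using s H_nonneg by (intro member_le_sum[where f="\<lambda>s. \<Sum>a<d. (q t a)^2 * H s t"] sum_nonneg) auto
  finally show ?thesis .
qed

lemma S_nonneg: "0 \<le> S t"
  unfolding S_def using H_nonneg by (intro sum_nonneg) auto

lemma S_meas[measurable]: "S \<in> borel_measurable borel"
  unfolding S_def by (intro borel_measurable_sum borel_measurable_times) (auto intro: qa_meas)

lemma int_D: "integrable M D"
proof -
  have "integrable M S" unfolding S_def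
    by (intro Bochner_Integration.integrable_sum int_q2H) auto
  thus ?thesis unfolding D_def using int_one by auto
qed

definition "rl K rr p = (if p < K then rr p else (p - K) div d + 1)"
definition "phi K (xi :: nat \<Rightarrow> real) p t = (if p < K then indicator {..xi p} t else q t ((p-K) mod d))"

lemma phi_meas[measurable]: "(\<lambda>t. phi K xi p t) \<in> borel_measurable borel"
  unfolding phi_def using d_pos by (cases "p < K") auto

lemma rl_le: "\<forall>i<K. rr i \<le> m \<Longrightarrow> p < K + m*d \<Longrightarrow> rl K rr p \<le> m"
  unfolding rl_def by (auto simp: less_mult_imp_div_less Suc_le_eq)

lemma feat_bound:
  assumes rr: "\<forall>i<K. rr i \<le> m" and p: "p < K + m*d" and p': "p' < K + m*d"
  shows "\<bar>phi K xi p t * phi K xi p' t * Kf (rl K rr p) (rl K rr p') t\<bar> \<le> D t"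
proof -
  have r: "rl K rr p \<le> m" "rl K rr p' \<le> m" using rl_le[OF rr] p p' by auto
  have S0: "0 \<le> S t" by (rule S_nonneg)
  have md: "(p - K) mod d < d" "(p' - K) mod d < d" using d_pos by auto
  consider "p < K" "p' < K" | "p < K" "\<not> p' < K" | "\<not> p < K" "p' < K" | "\<not> p < K" "\<not> p' < K" by blast
  thus ?thesis
  proof cases
    case 1
    have "\<bar>phi K xi p t * phi K xi p' t * Kf (rl K rr p) (rl K rr p') t\<bar> \<le> 1"
      using 1 r by (intro bnd1 Kf_le) (auto simp: phi_def indicator_def)
    thus ?thesis using S0 unfolding D_def by linarith
  next
    case 2
    have "\<bar>phi K xi p t * phi K xi p' t * Kf (rl K rr p) (rl K rr p') t\<bar>
        \<le> 1 + (phi K xi p' t)^2 * H (rl K rr p') t"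
      using 2 r by (intro bnd2 Kf_le1 H_le1) (auto simp: phi_def indicator_def)
    also have "(phi K xi p' t)^2 * H (rl K rr p') t \<le> S t"
      using S_term[of "rl K rr p'" "(p'-K) mod d" t] 2 r md by (simp add: phi_def rl_def)
    finally show ?thesis using S0 unfolding D_def by linarith
  next
    case 3
    have "\<bar>phi K xi p' t * phi K xi p t * Kf (rl K rr p') (rl K rr p) t\<bar>
        \<le> 1 + (phi K xi p t)^2 * H (rl K rr p) t"
      using 3 r by (intro bnd2 Kf_le1 H_le1) (auto simp: phi_def indicator_def)
    also have "(phi K xi p t)^2 * H (rl K rr p) t \<le> S t"
      using S_term[of "rl K rr p" "(p-K) mod d" t] 3 r md by (simp add: phi_def rl_def)
    finally show ?thesis using S0 unfolding D_def by (simp add: Kf_sym mult_ac)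
  next
    case 4
    have "\<bar>phi K xi p t * phi K xi p' t * Kf (rl K rr p) (rl K rr p') t\<bar>
        \<le> (phi K xi p t)^2 * H (rl K rr p) t + (phi K xi p' t)^2 * H (rl K rr p) t"
      using r by (intro bnd3 Kf_le2) auto
    also have "(phi K xi p t)^2 * H (rl K rr p) t \<le> S t"
      using S_term[of "rl K rr p" "(p-K) mod d" t] 4 r md by (simp add: phi_def rl_def)
    also have "(phi K xi p' t)^2 * H (rl K rr p) t \<le> S t"
      using S_term[of "rl K rr p" "(p'-K) mod d" t] 4 r md by (simp add: phi_def rl_def)
    finally show ?thesis unfolding D_def by linarith
  qed
qed

lemma feat_int:
  assumes rr: "\<forall>i<K. rr i \<le> m" and p: "p < K + m*d" and p': "p' < K + m*d"
  shows "integrable M (\<lambda>t. phi K xi p t * phi K xi p' t * Kf (rl K rr p) (rl K rr p') t)"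
proof (rule Bochner_Integration.integrable_bound[OF int_D])
  show "(\<lambda>t. phi K xi p t * phi K xi p' t * Kf (rl K rr p) (rl K rr p') t) \<in> borel_measurable M"
    unfolding M_meas by measurable
  show "AE x in M. norm (phi K xi p x * phi K xi p' x * Kf (rl K rr p) (rl K rr p') x) \<le> norm (D x)"
    using feat_bound[OF assms] S_nonneg by (intro AE_I2) (auto simp: D_def)
qed

end



context drm begin

abbreviation "AA rr xi i l \<equiv> a_rs d m rho theta q g0 (rr i) (rr l) (min (xi i) (xi l))"
abbreviation "BB rr xi i j \<equiv> B_r d m rho theta q g0 (rr i) (xi i) $ j"
abbreviation "WW j j' \<equiv> Wmat d m rho theta q g0 $$ (j, j')"

definition "F K rr xi p p' t = phi K xi p t * phi K xi p' t * Kf (rl K rr p) (rl K rr p') t"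

lemma G_UU: "i < K \<Longrightarrow> l < K \<Longrightarrow> integral\<^sup>L M (F K rr xi i l) = AA rr xi i l"
  unfolding a_rs_def set_lebesgue_integral_def F_def
  by (intro Bochner_Integration.integral_cong refl) (auto simp: phi_def rl_def Kf_def indicator_def)

lemma G_UV: "i < K \<Longrightarrow> j < m*d \<Longrightarrow> integral\<^sup>L M (F K rr xi i (K+j)) = BB rr xi i j"
  unfolding B_r_def set_lebesgue_integral_def F_def
  by (simp add: Let_def, intro Bochner_Integration.integral_cong refl) (auto simp: phi_def rl_def Kf_def indicator_def)

lemma G_VU: "i < K \<Longrightarrow> j < m*d \<Longrightarrow> integral\<^sup>L M (F K rr xi (K+j) i) = BB rr xi i j"
  unfolding B_r_def set_lebesgue_integral_def F_def
  by (simp add: Let_def, intro Bochner_Integration.integral_cong refl) (auto simp: phi_def rl_def Kf_def indicator_def kron_def)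

lemma G_VV: "j < m*d \<Longrightarrow> j' < m*d \<Longrightarrow> integral\<^sup>L M (F K rr xi (K+j) (K+j')) = WW j j'"
  unfolding Wmat_def F_def
  by (simp add: Let_def, intro Bochner_Integration.integral_cong refl) (auto simp: phi_def rl_def Kf_def mult_ac)

lemma main_ineq:
  fixes c w :: "nat \<Rightarrow> real" and xi :: "nat \<Rightarrow> real"
  assumes rr: "\<forall>i<K. rr i \<le> m"
    and wsol: "\<forall>j<m*d. (\<Sum>j'<m*d. WW j j' * w j') = (\<Sum>i<K. c i * BB rr xi i j)"
  shows "(\<Sum>j<m*d. w j * (\<Sum>i<K. c i * BB rr xi i j)) \<le> (\<Sum>i<K. \<Sum>l<K. c i * c l * AA rr xi i l)"
proof -
  define N where "N = m*d"
  define lam where "lam p = (if p < K then c p else - w (p - K))" for p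
  define X where "X p p' = lam p * lam p' * integral\<^sup>L M (F K rr xi p p')" for p p'
  have pw: "0 \<le> (\<Sum>p<K+N. \<Sum>p'<K+N. lam p * lam p' * F K rr xi p p' t)" for t
  proof -
    have r: "\<forall>p\<in>{..<K+N}. rl K rr p \<le> m" using rl_le[OF rr] by (auto simp: N_def)
    have "(\<Sum>p<K+N. \<Sum>p'<K+N. lam p * lam p' * F K rr xi p p' t)
      = (\<Sum>p<K+N. \<Sum>p'<K+N. (lam p * phi K xi p t) * (lam p' * phi K xi p' t) *
           (kron (rl K rr p) (rl K rr p') * H (rl K rr p) t - H (rl K rr p) t * H (rl K rr p') t))"
      unfolding F_def Kf_def by (simp add: mult_ac)
    also have "\<dots> = (\<Sum>k\<le>m. H k t * (\<Sum>p<K+N. (lam p * phi K xi p t) * (kron (rl K rr p) k - H (rl K rr p) t))^2)"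
      by (rule psd_ident[OF r sum_H])
    also have "\<dots> \<ge> 0" using H_nonneg by (intro sum_nonneg mult_nonneg_nonneg) auto
    finally show ?thesis by simp
  qed
  have ints: "p < K+N \<Longrightarrow> p' < K+N \<Longrightarrow> integrable M (F K rr xi p p')" for p p'
    unfolding F_def N_def using feat_int[OF rr] by simp
  have "0 \<le> integral\<^sup>L M (\<lambda>t. \<Sum>p<K+N. \<Sum>p'<K+N. lam p * lam p' * F K rr xi p p' t)"
    using pw by (intro integral_nonneg_AE AE_I2) auto
  also have "\<dots> = (\<Sum>p<K+N. \<Sum>p'<K+N. X p p')"
  proof -
    have "integral\<^sup>L M (\<lambda>t. \<Sum>p<K+N. \<Sum>p'<K+N. lam p * lam p' * F K rr xi p p' t)
       = (\<Sum>p<K+N. integral\<^sup>L M (\<lambda>t. \<Sum>p'<K+N. lam p * lam p' * F K rr xi p p' t))"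
      using ints by (intro Bochner_Integration.integral_sum Bochner_Integration.integrable_sum
          Bochner_Integration.integrable_mult_right) auto
    also have "\<dots> = (\<Sum>p<K+N. \<Sum>p'<K+N. integral\<^sup>L M (\<lambda>t. lam p * lam p' * F K rr xi p p' t))"
      using ints by (intro sum.cong refl Bochner_Integration.integral_sum
          Bochner_Integration.integrable_mult_right) auto
    also have "\<dots> = (\<Sum>p<K+N. \<Sum>p'<K+N. X p p')"
      unfolding X_def by simp
    finally show ?thesis .
  qed
  also have "\<dots> = (\<Sum>i<K. \<Sum>l<K. X i l) + (\<Sum>i<K. \<Sum>j<N. X i (K+j))
       + (\<Sum>j<N. \<Sum>l<K. X (K+j) l) + (\<Sum>j<N. \<Sum>j'<N. X (K+j) (K+j'))"
    by (simp add: sum_split_add sum.distrib)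
  also have "(\<Sum>i<K. \<Sum>l<K. X i l) = (\<Sum>i<K. \<Sum>l<K. c i * c l * AA rr xi i l)"
    unfolding X_def lam_def by (intro sum.cong refl) (simp add: G_UU)
  also have "(\<Sum>i<K. \<Sum>j<N. X i (K+j)) = - (\<Sum>j<m*d. w j * (\<Sum>i<K. c i * BB rr xi i j))"
  proof -
    have "(\<Sum>i<K. \<Sum>j<N. X i (K+j)) = (\<Sum>i<K. \<Sum>j<N. - (w j * (c i * BB rr xi i j)))"
      unfolding X_def lam_def N_def by (intro sum.cong refl) (simp add: G_UV)
    also have "\<dots> = - (\<Sum>j<N. w j * (\<Sum>i<K. c i * BB rr xi i j))"
      by (subst sum.swap) (simp add: sum_negf sum_distrib_left)
    finally show ?thesis by (simp add: N_def)
  qed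
  also have "(\<Sum>j<N. \<Sum>l<K. X (K+j) l) = - (\<Sum>j<m*d. w j * (\<Sum>i<K. c i * BB rr xi i j))"
  proof -
    have "(\<Sum>j<N. \<Sum>l<K. X (K+j) l) = (\<Sum>j<N. \<Sum>i<K. - (w j * (c i * BB rr xi i j)))"
      unfolding X_def lam_def N_def by (intro sum.cong refl) (simp add: G_VU)
    also have "\<dots> = - (\<Sum>j<N. w j * (\<Sum>i<K. c i * BB rr xi i j))"
      by (simp add: sum_negf sum_distrib_left)
    finally show ?thesis by (simp add: N_def)
  qed
  also have "(\<Sum>j<N. \<Sum>j'<N. X (K+j) (K+j')) = (\<Sum>j<m*d. w j * (\<Sum>i<K. c i * BB rr xi i j))"
  proof -
    have "(\<Sum>j<N. \<Sum>j'<N. X (K+j) (K+j')) = (\<Sum>j<N. w j * (\<Sum>j'<N. WW j j' * w j'))"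
      unfolding X_def lam_def N_def by (intro sum.cong refl) (simp add: G_VV sum_distrib_left mult_ac)
    also have "\<dots> = (\<Sum>j<m*d. w j * (\<Sum>i<K. c i * BB rr xi i j))"
      using wsol unfolding N_def by (intro sum.cong refl) simp
    finally show ?thesis .
  qed
  finally show ?thesis by simp
qed

end



lemma quad_form:
  assumes "A \<in> carrier_mat n n" "v \<in> carrier_vec n"
  shows "v \<bullet> (A *\<^sub>v v) = (\<Sum>j<n. v $ j * (\<Sum>j'<n. A $$ (j, j') * v $ j'))"
  using assms by (simp add: scalar_prod_def mult_mat_vec_def row_def atLeast0LessThan)

lemma bilin_form:
  assumes "A \<in> carrier_mat n n" "v \<in> carrier_vec n" "u \<in> carrier_vec n"
  shows "u \<bullet> (A *\<^sub>v v) = (\<Sum>j<n. u $ j * (\<Sum>j'<n. A $$ (j, j') * v $ j'))"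
  using assms by (simp add: scalar_prod_def mult_mat_vec_def row_def atLeast0LessThan)

context drm begin

lemma W_carrier: "Wmat d m rho theta q g0 \<in> carrier_mat (m*d) (m*d)"
  unfolding Wmat_def by simp

lemma AE_transfer:
  assumes "AE x in M. P x"
  shows "AE x in density lborel (\<lambda>x. ennreal (g0 x)). P x"
proof -
  have "AE x in lborel. 0 < ennreal (h x * g0 x) \<longrightarrow> P x"
    using assms unfolding Gbar_def
    by (subst (asm) AE_density) (auto intro!: measurable_compose[OF _ measurable_ennreal] borel_measurable_times)
  hence "AE x in lborel. 0 < ennreal (g0 x) \<longrightarrow> P x"
    by (rule eventually_mono) (use h_pos[of theta] in auto)
  thus ?thesis
    by (subst AE_density) (auto intro!: measurable_compose[OF _ measurable_ennreal])
qed

lemma kron_shift_sum: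
  fixes G :: "nat \<Rightarrow> real"
  assumes "1 \<le> k" "k \<le> m"
  shows "(\<Sum>s<m. kron (s+1) k * G s) = G (k - 1)"
proof -
  have "(\<Sum>s<m. kron (s+1) k * G s) = (\<Sum>s<m. if s = k - 1 then G s else 0)"
    using assms by (intro sum.cong refl) (auto simp: kron_def)
  also have "\<dots> = G (k - 1)" using assms by (simp add: sum.delta)
  finally show ?thesis .
qed

lemma W_kernel:
  assumes v: "v \<in> carrier_vec (m*d)" and Wv: "Wmat d m rho theta q g0 *\<^sub>v v = 0\<^sub>v (m*d)"
  shows "v = 0\<^sub>v (m*d)"
proof -
  define N where "N = m*d"
  define rr :: "nat \<Rightarrow> nat" where "rr = (\<lambda>_. 0)"
  define xi :: "nat \<Rightarrow> real" where "xi = (\<lambda>_. 0)"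
  have rr: "\<forall>i<0. rr i \<le> m" by simp
  have "0 = v \<bullet> (Wmat d m rho theta q g0 *\<^sub>v v)" using Wv v by simp
  also have "\<dots> = (\<Sum>j<N. v $ j * (\<Sum>j'<N. WW j j' * v $ j'))"
    unfolding N_def by (rule quad_form[OF W_carrier v])
  also have "\<dots> = (\<Sum>j<N. \<Sum>j'<N. integral\<^sup>L M (\<lambda>t. v $ j * v $ j' * F 0 rr xi j j' t))"
    using G_VV[of _ _ 0 rr xi] unfolding N_def
    by (intro sum.cong refl) (simp add: sum_distrib_left mult_ac)
  also have "\<dots> = integral\<^sup>L M (\<lambda>t. \<Sum>j<N. \<Sum>j'<N. v $ j * v $ j' * F 0 rr xi j j' t)"
    using feat_int[OF rr] unfolding F_def N_def
    by (subst Bochner_Integration.integral_sum,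
        auto intro!: Bochner_Integration.integrable_sum Bochner_Integration.integrable_mult_right
             Bochner_Integration.integral_sum[symmetric] sum.cong)
  finally have int0: "integral\<^sup>L M (\<lambda>t. \<Sum>j<N. \<Sum>j'<N. v $ j * v $ j' * F 0 rr xi j j' t) = 0" by simp
  define g where "g k t = (\<Sum>j<N. (v $ j * phi 0 xi j t) * (kron (rl 0 rr j) k - H (rl 0 rr j) t))" for k t
  have r: "\<forall>p\<in>{..<N}. rl 0 rr p \<le> m" using rl_le[OF rr] by (auto simp: N_def)
  have Q: "(\<Sum>j<N. \<Sum>j'<N. v $ j * v $ j' * F 0 rr xi j j' t) = (\<Sum>k\<le>m. H k t * (g k t)^2)" for t
  proof -
    have "(\<Sum>j<N. \<Sum>j'<N. v $ j * v $ j' * F 0 rr xi j j' t)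
      = (\<Sum>p<N. \<Sum>p'<N. (v $ p * phi 0 xi p t) * (v $ p' * phi 0 xi p' t) *
           (kron (rl 0 rr p) (rl 0 rr p') * H (rl 0 rr p) t - H (rl 0 rr p) t * H (rl 0 rr p') t))"
      unfolding F_def Kf_def by (simp add: mult_ac)
    also have "\<dots> = (\<Sum>k\<le>m. H k t * (g k t)^2)"
      unfolding g_def by (rule psd_ident[OF r sum_H])
    finally show ?thesis .
  qed
  have nn: "0 \<le> (\<Sum>k\<le>m. H k t * (g k t)^2)" for t
    using H_nonneg by (intro sum_nonneg mult_nonneg_nonneg) auto
  have intQ: "integrable M (\<lambda>t. \<Sum>j<N. \<Sum>j'<N. v $ j * v $ j' * F 0 rr xi j j' t)"
    using feat_int[OF rr] unfolding F_def N_def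
    by (auto intro!: Bochner_Integration.integrable_sum Bochner_Integration.integrable_mult_right)
  have "AE t in M. (\<Sum>j<N. \<Sum>j'<N. v $ j * v $ j' * F 0 rr xi j j' t) = 0"
    using integral_nonneg_eq_0_iff_AE[OF intQ] int0 Q nn by simp
  hence AEg: "AE t in M. \<forall>k\<le>m. g k t = 0"
  proof (rule eventually_mono)
    fix t assume "(\<Sum>j<N. \<Sum>j'<N. v $ j * v $ j' * F 0 rr xi j j' t) = 0"
    hence "(\<Sum>k\<le>m. H k t * (g k t)^2) = 0" using Q by simp
    hence "\<forall>k\<in>{..m}. H k t * (g k t)^2 = 0"
      using H_nonneg by (subst (asm) sum_nonneg_eq_0_iff) auto
    hence hz: "\<forall>k\<in>{..m}. H k t = 0 \<or> g k t = 0" by simp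
    show "\<forall>k\<le>m. g k t = 0"
    proof (intro allI impI)
      fix k assume k: "k \<le> m"
      hence "H k t = 0 \<or> g k t = 0" using hz by auto
      moreover have "0 < H k t" using H_pos[OF k] .
      ultimately show "g k t = 0" by auto
    qed
  qed
  define f where "f k t = (\<Sum>j<N. v $ j * q t (j mod d) * kron (j div d + 1) k)" for k t
  define mn where "mn t = (\<Sum>j<N. v $ j * q t (j mod d) * H (j div d + 1) t)" for t
  have gfm: "g k t = f k t - mn t" for k t
    unfolding g_def f_def mn_def phi_def rl_def
    by (simp add: sum_subtractf algebra_simps)
  have f0: "f 0 t = 0" for t unfolding f_def kron_def by simp
  have fk: "f k t = (\<Sum>a<d. v $ ((k-1)*d + a) * q t a)" if "1 \<le> k" "k \<le> m" for k t
  proof -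
    have "f k t = (\<Sum>s<m. \<Sum>a<d. v $ (s*d+a) * q t ((s*d+a) mod d) * kron ((s*d+a) div d + 1) k)"
      unfolding f_def N_def by (rule sum_split_mult)
    also have "\<dots> = (\<Sum>s<m. kron (s+1) k * (\<Sum>a<d. v $ (s*d+a) * q t a))"
      using d_pos by (intro sum.cong refl) (simp add: sum_distrib_left mult_ac)
    also have "\<dots> = (\<Sum>a<d. v $ ((k-1)*d + a) * q t a)"
      by (rule kron_shift_sum[OF that])
    finally show ?thesis .
  qed
  have AEf: "AE t in M. \<forall>k. 1 \<le> k \<and> k \<le> m \<longrightarrow> (\<Sum>a<d. v $ ((k-1)*d + a) * q t a) = 0"
    using AEg
  proof (rule eventually_mono)
    fix t assume g0: "\<forall>k\<le>m. g k t = 0"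
    hence "mn t = 0" using gfm[of 0 t] f0 by simp
    thus "\<forall>k. 1 \<le> k \<and> k \<le> m \<longrightarrow> (\<Sum>a<d. v $ ((k-1)*d + a) * q t a) = 0"
      using g0 gfm fk by auto
  qed
  have vz: "v $ ((k-1)*d + a) = 0" if "1 \<le> k" "k \<le> m" "a < d" for k a
  proof -
    have "AE t in density lborel (\<lambda>x. ennreal (g0 x)). (\<Sum>a<d. v $ ((k-1)*d + a) * q t a) = 0"
      using AE_transfer[OF AEf] by (rule eventually_mono) (use that in auto)
    hence "\<forall>a<d. v $ ((k-1)*d + a) = 0" using spec[OF q_indep, of "\<lambda>a. v $ ((k-1)*d + a)"] by simp
    thus ?thesis using that by blast
  qed
  show ?thesis
  proof (rule eq_vecI)
    show "dim_vec v = dim_vec (0\<^sub>v (m*d))" using v by simp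
    fix j assume "j < dim_vec (0\<^sub>v (m*d))"
    hence j: "j < m*d" by simp
    hence jd: "j div d < m" by (simp add: less_mult_imp_div_less)
    have e: "(j div d + 1 - 1) * d + j mod d = j" by simp
    have "v $ ((j div d + 1 - 1) * d + j mod d) = 0"
      by (rule vz) (use jd d_pos in auto)
    hence "v $ j = 0" unfolding e .
    thus "v $ j = 0\<^sub>v (m*d) $ j" using j by simp
  qed
qed

lemma W_inv: "\<exists>Wi. mat_inverse (Wmat d m rho theta q g0) = Some Wi \<and>
    Wmat d m rho theta q g0 * Wi = 1\<^sub>m (m*d) \<and> Wi \<in> carrier_mat (m*d) (m*d)"
proof -
  have U: "Wmat d m rho theta q g0 \<in> Units (ring_mat TYPE(real) (m*d) undefined)"
  proof (rule det_non_zero_imp_unit[OF W_carrier])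
    have nk: "\<not> (\<exists>v. v \<in> carrier_vec (m*d) \<and> v \<noteq> 0\<^sub>v (m*d) \<and> Wmat d m rho theta q g0 *\<^sub>v v = 0\<^sub>v (m*d))"
      using W_kernel by blast
    show "Determinant.det (Wmat d m rho theta q g0) \<noteq> 0"
      using det_0_iff_vec_prod_zero[OF W_carrier] nk by simp
  qed
  show ?thesis
  proof (cases "mat_inverse (Wmat d m rho theta q g0)")
    case None
    have "Wmat d m rho theta q g0 \<notin> Units (ring_mat TYPE(real) (m*d) undefined)"
      by (rule mat_inverse(1)[OF W_carrier None])
    thus ?thesis using U by contradiction
  next
    case (Some Wi)
    have "Wmat d m rho theta q g0 * Wi = 1\<^sub>m (m*d) \<and> Wi * Wmat d m rho theta q g0 = 1\<^sub>m (m*d) \<and> Wi \<in> carrier_mat (m*d) (m*d)"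
      by (rule mat_inverse(2)[OF W_carrier Some])
    thus ?thesis using Some by auto
  qed
qed

end



lemma bilin_sum:
  fixes c :: "nat \<Rightarrow> real"
  shows "(\<Sum>i<K. \<Sum>l<K. c i * c l * (\<Sum>j<N. u i j * (\<Sum>j'<N. W j j' * u l j')))
    = (\<Sum>j<N. (\<Sum>i<K. c i * u i j) * (\<Sum>j'<N. W j j' * (\<Sum>l<K. c l * u l j')))"
proof -
  have "(\<Sum>i<K. \<Sum>l<K. c i * c l * (\<Sum>j<N. u i j * (\<Sum>j'<N. W j j' * u l j')))
     = (\<Sum>i<K. \<Sum>l<K. \<Sum>j<N. \<Sum>j'<N. c i * u i j * (W j j' * (c l * u l j')))"
    by (simp add: sum_distrib_left mult_ac)
  also have "\<dots> = (\<Sum>i<K. \<Sum>j<N. \<Sum>l<K. \<Sum>j'<N. c i * u i j * (W j j' * (c l * u l j')))"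
    by (intro sum.cong refl, rule sum.swap)
  also have "\<dots> = (\<Sum>i<K. \<Sum>j<N. \<Sum>j'<N. \<Sum>l<K. c i * u i j * (W j j' * (c l * u l j')))"
    by (intro sum.cong refl, rule sum.swap)
  also have "\<dots> = (\<Sum>j<N. \<Sum>i<K. \<Sum>j'<N. \<Sum>l<K. c i * u i j * (W j j' * (c l * u l j')))"
    by (rule sum.swap)
  also have "\<dots> = (\<Sum>j<N. \<Sum>i<K. (c i * u i j) * (\<Sum>j'<N. W j j' * (\<Sum>l<K. c l * u l j')))"
    by (intro sum.cong refl) (simp only: sum_distrib_left)
  also have "\<dots> = (\<Sum>j<N. (\<Sum>i<K. c i * u i j) * (\<Sum>j'<N. W j j' * (\<Sum>l<K. c l * u l j')))"
    by (simp only: sum_distrib_right)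
  finally show ?thesis .
qed

theorem theorem4p1:
  fixes d m K :: nat and rho :: "nat \<Rightarrow> real" and theta :: "nat \<Rightarrow> nat \<Rightarrow> real"
    and q :: "real \<Rightarrow> nat \<Rightarrow> real" and g0 :: "real \<Rightarrow> real"
    and rr :: "nat \<Rightarrow> nat" and al :: "nat \<Rightarrow> real"
  assumes d_pos: "0 < d"
    and q_meas: "\<forall>a<d. (\<lambda>x. q x a) \<in> borel_measurable borel"
    and q_first: "\<forall>x. q x 0 = 1"
    and q_indep: "\<forall>c :: nat \<Rightarrow> real.
        (AE x in density lborel (\<lambda>x. ennreal (g0 x)). (\<Sum>a<d. c a * q x a) = 0)
        \<longrightarrow> (\<forall>a<d. c a = 0)"
    and g0_meas: "g0 \<in> borel_measurable borel"
    and g0_nonneg: "\<forall>x. 0 \<le> g0 x"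
    and Gk_prob: "\<forall>k\<le>m. prob_space (density lborel (\<lambda>x. ennreal (gk d theta q g0 k x)))"
    and theta0: "\<forall>a<d. theta 0 a = 0"
    and rho_pos: "\<forall>k\<le>m. 0 < rho k"
    and rho_sum: "(\<Sum>k\<le>m. rho k) = 1"
    and h_integrable: "\<exists>\<epsilon>>0. \<forall>theta' :: nat \<Rightarrow> nat \<Rightarrow> real.
        (\<forall>a<d. theta' 0 a = 0) \<and> (\<forall>k\<le>m. \<forall>a<d. \<bar>theta' k a - theta k a\<bar> < \<epsilon>)
        \<longrightarrow> integrable (density lborel (\<lambda>x. ennreal (g0 x))) (hfun d m rho theta' q)"
    and rr_range: "\<forall>i<K. rr i \<le> m"
    and al_range: "\<forall>i<K. 0 < al i \<and> al i < 1"
    and g_cont: "\<forall>i<K. isCont (gk d theta q g0 (rr i)) (quantile d theta q g0 (rr i) (al i))"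
    and g_pos: "\<forall>i<K. 0 < gk d theta q g0 (rr i) (quantile d theta q g0 (rr i) (al i))"
  shows "nonneg_definite K (Sigma_EM d rho theta q g0 K rr al - Sigma_EL d m rho theta q g0 K rr al)"
proof -
  interpret drm d m rho theta q g0
    using d_pos q_meas q_indep g0_meas g0_nonneg theta0 rho_pos h_integrable by unfold_locales
  obtain Wi where Wi: "mat_inverse (Wmat d m rho theta q g0) = Some Wi"
      "Wmat d m rho theta q g0 * Wi = 1\<^sub>m (m*d)" "Wi \<in> carrier_mat (m*d) (m*d)"
    using W_inv by blast
  define N where "N = m*d"
  define xi where "xi i = quantile d theta q g0 (rr i) (al i)" for i
  define gg where "gg i = gk d theta q g0 (rr i) (xi i)" for i
  define A where "A = Sigma_EM d rho theta q g0 K rr al - Sigma_EL d m rho theta q g0 K rr al"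
  have Acar: "A \<in> carrier_mat K K"
    unfolding A_def Sigma_EL_def by (rule minus_carrier_mat) simp
  have Bdim: "B_r d m rho theta q g0 r x \<in> carrier_vec N" for r x
    unfolding B_r_def N_def by simp
  show ?thesis
    unfolding nonneg_definite_def A_def[symmetric]
  proof (intro conjI ballI Acar)
    fix v :: "real vec" assume v: "v \<in> carrier_vec K"
    define c where "c i = v $ i / (rho (rr i) * gg i)" for i
    define beta where "beta j = (\<Sum>i<K. c i * BB rr xi i j)" for j
    define w where "w j = (\<Sum>j'<N. Wi $$ (j, j') * beta j')" for j
    have entry: "v $ i * (A $$ (i, l) * v $ l)
        = c i * c l * (AA rr xi i l - B_r d m rho theta q g0 (rr i) (xi i) \<bullet> (Wi *\<^sub>v B_r d m rho theta q g0 (rr l) (xi l)))"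
      if il: "i < K" "l < K" for i l
    proof -
      have p: "rho (rr i) \<noteq> 0" "rho (rr l) \<noteq> 0" "gg i \<noteq> 0" "gg l \<noteq> 0"
        using rho_pos rr_range g_pos il unfolding gg_def xi_def by (auto dest: less_imp_neq[THEN not_sym])
      have e: "A $$ (i, l) = (AA rr xi i l - B_r d m rho theta q g0 (rr i) (xi i) \<bullet> (Wi *\<^sub>v B_r d m rho theta q g0 (rr l) (xi l)))
          / (rho (rr i) * rho (rr l)) / (gg i * gg l)"
        using il unfolding A_def Sigma_EM_def Sigma_EL_def omega_rs_def
        by (simp add: Let_def Wi(1) xi_def[symmetric] gg_def[symmetric] diff_divide_distrib)
      show ?thesis
        unfolding e c_def using p by (simp add: field_simps)
    qed
    have "v \<bullet> (A *\<^sub>v v) = (\<Sum>i<K. v $ i * (\<Sum>l<K. A $$ (i, l) * v $ l))"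
      by (rule quad_form[OF Acar v])
    also have "\<dots> = (\<Sum>i<K. \<Sum>l<K. c i * c l * (AA rr xi i l - B_r d m rho theta q g0 (rr i) (xi i) \<bullet> (Wi *\<^sub>v B_r d m rho theta q g0 (rr l) (xi l))))"
      using entry by (simp add: sum_distrib_left)
    also have "\<dots> = (\<Sum>i<K. \<Sum>l<K. c i * c l * AA rr xi i l)
        - (\<Sum>i<K. \<Sum>l<K. c i * c l * (\<Sum>j<N. BB rr xi i j * (\<Sum>j'<N. Wi $$ (j, j') * BB rr xi l j')))"
      using bilin_form[OF Wi(3)[folded N_def] Bdim Bdim]
      by (simp add: sum_subtractf right_diff_distrib N_def)
    also have "(\<Sum>i<K. \<Sum>l<K. c i * c l * (\<Sum>j<N. BB rr xi i j * (\<Sum>j'<N. Wi $$ (j, j') * BB rr xi l j')))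
        = (\<Sum>j<N. beta j * w j)"
      unfolding bilin_sum beta_def w_def ..
    finally have eq: "v \<bullet> (A *\<^sub>v v) = (\<Sum>i<K. \<Sum>l<K. c i * c l * AA rr xi i l) - (\<Sum>j<N. beta j * w j)" .
    have wsol: "\<forall>j<m*d. (\<Sum>j'<m*d. WW j j' * w j') = (\<Sum>i<K. c i * BB rr xi i j)"
    proof (intro allI impI)
      fix j assume j: "j < m*d"
      have "(\<Sum>j'<N. WW j j' * w j') = (\<Sum>j''<N. (\<Sum>j'<N. WW j j' * Wi $$ (j', j'')) * beta j'')"
      proof -
        have "(\<Sum>j'<N. WW j j' * w j') = (\<Sum>j'<N. \<Sum>j''<N. WW j j' * Wi $$ (j', j'') * beta j'')"
          unfolding w_def by (simp add: sum_distrib_left mult_ac)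
        also have "\<dots> = (\<Sum>j''<N. \<Sum>j'<N. WW j j' * Wi $$ (j', j'') * beta j'')"
          by (rule sum.swap)
        also have "\<dots> = (\<Sum>j''<N. (\<Sum>j'<N. WW j j' * Wi $$ (j', j'')) * beta j'')"
          by (simp add: sum_distrib_right)
        finally show ?thesis .
      qed
      also have "\<dots> = (\<Sum>j''<N. (if j = j'' then beta j'' else 0))"
      proof (intro sum.cong refl)
        fix j'' assume "j'' \<in> {..<N}"
        hence m1: "(Wmat d m rho theta q g0 * Wi) $$ (j, j'') = (\<Sum>j'<N. WW j j' * Wi $$ (j', j''))"
          using j Wi(3) W_carrier unfolding N_def
          by (simp add: scalar_prod_def row_def col_def atLeast0LessThan)
        have m2: "(Wmat d m rho theta q g0 * Wi) $$ (j, j'') = (if j = j'' then 1 else 0)"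
          using Wi(2) j \<open>j'' \<in> {..<N}\<close> unfolding N_def by simp
        have "(\<Sum>j'<N. WW j j' * Wi $$ (j', j'')) = (if j = j'' then 1 else 0)"
          by (simp only: m1[symmetric] m2)
        thus "(\<Sum>j'<N. WW j j' * Wi $$ (j', j'')) * beta j'' = (if j = j'' then beta j'' else 0)"
          by simp
      qed
      also have "\<dots> = beta j" using j by (simp add: N_def)
      finally show "(\<Sum>j'<m*d. WW j j' * w j') = (\<Sum>i<K. c i * BB rr xi i j)"
        unfolding N_def beta_def .
    qed
    have "(\<Sum>j<m*d. w j * (\<Sum>i<K. c i * BB rr xi i j)) \<le> (\<Sum>i<K. \<Sum>l<K. c i * c l * AA rr xi i l)"
      by (rule main_ineq[OF rr_range wsol])
    hence "(\<Sum>j<N. beta j * w j) \<le> (\<Sum>i<K. \<Sum>l<K. c i * c l * AA rr xi i l)"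
      unfolding beta_def N_def by (simp add: mult_ac)
    thus "0 \<le> v \<bullet> (A *\<^sub>v v)" unfolding eq by simp
  qed
qed


end
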